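(* For every $\alpha \in (0,1)$ and every $A > 0$ there exists $C = C(\alpha, A)$ such that the following holds. Let $m \ge 4$ be an integer and let $b = (b_1,\ldots,b_m) \in \mathbb{R}^m$ satisfy $\|b\|_{1,\infty} \le 1$ and $\|b\|_1 \ge C (\log\log m)^2$. Then there exist a positive integer $l$ with $A \log\log m \le l \le \log m$ and a subset $I_1 \subseteq [m]$ such that the following holds: for every vector $\lambda = (\lambda_i)_{i \in I_1}$ with $\|\lambda\|_1 \le 1$ there exists a subset $I_2 \subseteq I_1$ such that, writing $n_1 := |I_1|$ and $n_2 := |I_2|$, (i) $2^{l/2} \le \frac{m}{n_1} \le \frac{m}{n_2} \le \big(\frac{m}{n_1}\big)^{1+\alpha}$; (ii) $|b_i| \ge \frac{1}{l n_1}$ for all $i \in I_1$, and $|b_i| \ge \frac{1}{l n_2}$ and $|b_i| \ge 2|\lambda_i|$ for all $i \in I_2$.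
   Context: $[m] = \{1,\ldots,m\}$. For a finite sequence $a = (a_i)$, $(|a|^*_i)$ denotes the non-increasing rearrangement of $(|a_i|)$; the weak $\ell_1$ norm $\|a\|_{1,\infty}$ is the infimum of $M > 0$ such that $|a|^*_i \le M i^{-1}$ for all $i$. $\|a\|_1 = \sum_i |a_i|$. All logarithms are to base $2$. *)

theory Defs
  imports Complex_Main
begin

text \<open>Vectors in R^m are functions nat => real, relevant on indices {1..m}.\<close>

definition decr_rearr :: "(nat \<Rightarrow> real) \<Rightarrow> nat \<Rightarrow> nat \<Rightarrow> real" where
  "decr_rearr a m i = rev (sort (map (\<lambda>j. \<bar>a j\<bar>) [1..<m+1])) ! (i - 1)"

definition weak_l1_norm :: "(nat \<Rightarrow> real) \<Rightarrow> nat \<Rightarrow> real" where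
  "weak_l1_norm a m = Inf {M. M > 0 \<and> (\<forall>i\<in>{1..m}. decr_rearr a m i \<le> M / real i)}"

definition l1_norm :: "(nat \<Rightarrow> real) \<Rightarrow> nat set \<Rightarrow> real" where
  "l1_norm a I = (\<Sum>i\<in>I. \<bar>a i\<bar>)"

end

theory Submission
  imports Defs
begin


lemma sorted_nth_ge:
  fixes ys :: "real list"
  assumes srt: "sorted ys" and s1: "1 \<le> s" and sl: "s \<le> length ys"
    and cnt: "s \<le> length (filter (\<lambda>x. t \<le> x) ys)"
  shows "t \<le> ys ! (length ys - s)"
proof (rule ccontr)
  assume "\<not> ?thesis"
  hence lt: "ys ! (length ys - s) < t" by simp
  have sub: "{p. p < length ys \<and> t \<le> ys ! p} \<subseteq> {length ys - s <..< length ys}"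
  proof
    fix p assume p: "p \<in> {p. p < length ys \<and> t \<le> ys ! p}"
    have "length ys - s < p"
    proof (rule ccontr)
      assume "\<not> length ys - s < p"
      hence "p \<le> length ys - s" by simp
      hence "ys ! p \<le> ys ! (length ys - s)"
        using srt sl s1 by (intro sorted_nth_mono) auto
      with lt p show False by simp
    qed
    with p show "p \<in> {length ys - s <..< length ys}" by simp
  qed
  have "length (filter (\<lambda>x. t \<le> x) ys) = card {p. p < length ys \<and> t \<le> ys ! p}"
    by (simp add: length_filter_conv_card)
  also have "\<dots> \<le> card {length ys - s <..< length ys}" by (rule card_mono[OF _ sub]) simp
  also have "\<dots> = s - 1" using sl s1 by simp
  finally show False using cnt s1 by simp
qed

lemma len_filter_map_upt:
  "length (filter P (map f [1..<m+1])) = card {i\<in>{1..m}. P (f i)}"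
proof -
  have "length (filter P (map f [1..<m+1])) = length (filter (P \<circ> f) [1..<m+1])"
    by (simp add: filter_map)
  also have "\<dots> = card (set (filter (P \<circ> f) [1..<m+1]))"
    by (metis distinct_card distinct_filter distinct_upt)
  also have "set (filter (P \<circ> f) [1..<m+1]) = {i\<in>{1..m}. P (f i)}" by auto
  finally show ?thesis .
qed

lemma decr_ge:
  assumes s1: "1 \<le> s" and sm: "s \<le> card {i\<in>{1..m}. t \<le> \<bar>b i\<bar>}"
  shows "t \<le> decr_rearr b m s"
proof -
  define zs where "zs = map (\<lambda>j. \<bar>b j\<bar>) [1..<m+1]"
  have lz: "length zs = m" by (simp add: zs_def)
  have cm: "card {i\<in>{1..m}. t \<le> \<bar>b i\<bar>} \<le> m"
    by (rule order.trans[OF card_mono[of "{1..m}"]]) auto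
  have "length (filter (\<lambda>x. t \<le> x) (sort zs)) = length (filter (\<lambda>x. t \<le> x) zs)"
    by (simp add: filter_sort)
  also have "\<dots> = card {i\<in>{1..m}. t \<le> \<bar>b i\<bar>}" unfolding zs_def by (rule len_filter_map_upt)
  finally have c: "s \<le> length (filter (\<lambda>x. t \<le> x) (sort zs))" using sm by simp
  have "t \<le> sort zs ! (length (sort zs) - s)"
    by (rule sorted_nth_ge) (use c s1 sm cm lz in auto)
  moreover have "decr_rearr b m s = sort zs ! (length (sort zs) - s)"
    unfolding decr_rearr_def zs_def[symmetric] using s1 sm cm lz
    by (simp add: rev_nth Suc_diff_Suc)
  ultimately show ?thesis by simp
qed

lemma decr_le_sum:
  assumes "1 \<le> i" "i \<le> m"
  shows "decr_rearr b m i \<le> (\<Sum>j\<in>{1..m}. \<bar>b j\<bar>)"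
proof -
  define zs where "zs = map (\<lambda>j. \<bar>b j\<bar>) [1..<m+1]"
  have "decr_rearr b m i \<in> set (rev (sort zs))"
    unfolding decr_rearr_def zs_def[symmetric] using assms by (intro nth_mem) (simp add: zs_def)
  hence "decr_rearr b m i \<in> (\<lambda>j. \<bar>b j\<bar>) ` {1..m}" by (auto simp: zs_def)
  then obtain j where j: "j \<in> {1..m}" "decr_rearr b m i = \<bar>b j\<bar>" by auto
  have "\<bar>b j\<bar> \<le> (\<Sum>j\<in>{1..m}. \<bar>b j\<bar>)"
    by (rule member_le_sum) (use j in auto)
  thus ?thesis using j by simp
qed

lemma weak_F1:
  assumes w: "weak_l1_norm b m \<le> 1" and t: "0 < t"
  shows "real (card {i\<in>{1..m}. t \<le> \<bar>b i\<bar>}) * t \<le> 1"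
proof (rule ccontr)
  define s where "s = card {i\<in>{1..m}. t \<le> \<bar>b i\<bar>}"
  assume "\<not> ?thesis"
  hence st: "real s * t > 1" by (simp add: s_def)
  hence s1: "1 \<le> s" by (cases s) auto
  define S where "S = {M. M > 0 \<and> (\<forall>i\<in>{1..m}. decr_rearr b m i \<le> M / real i)}"
  define Z where "Z = (\<Sum>j\<in>{1..m}. \<bar>b j\<bar>) * real m + 1"
  have "Z \<in> S"
  proof -
    have Z0: "Z > 0" unfolding Z_def by (intro add_nonneg_pos mult_nonneg_nonneg sum_nonneg) auto
    have "decr_rearr b m i \<le> Z / real i" if i: "i \<in> {1..m}" for i
    proof -
      have "decr_rearr b m i \<le> (\<Sum>j\<in>{1..m}. \<bar>b j\<bar>)" using i decr_le_sum by auto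
      also have "\<dots> \<le> Z / real m"
        using i by (simp add: Z_def field_simps sum_nonneg)
      also have "\<dots> \<le> Z / real i" using i Z0 by (intro divide_left_mono) auto
      finally show ?thesis .
    qed
    thus ?thesis using Z0 by (simp add: S_def)
  qed
  hence ne: "S \<noteq> {}" by auto
  have bdd: "bdd_below S" unfolding S_def by (rule bdd_belowI[of _ 0]) auto
  have "Inf S < real s * t" using w st by (simp add: weak_l1_norm_def S_def)
  then obtain M where M: "M \<in> S" "M < real s * t" using cInf_lessD[OF ne] by blast
  have sm: "s \<le> m"
    unfolding s_def by (rule order.trans[OF card_mono[of "{1..m}"]]) auto
  have "t \<le> decr_rearr b m s" using decr_ge[OF s1] by (simp add: s_def)
  also have "\<dots> \<le> M / real s" using M(1) s1 sm by (simp add: S_def)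
  also have "\<dots> < t" using M(2) s1 by (simp add: field_simps)
  finally show False by simp
qed



lemma window_lemma:
  fixes b :: "nat \<Rightarrow> real" and lev :: "nat \<Rightarrow> nat" and U :: "nat set" and l m :: nat
    and X \<alpha> :: real
  assumes F1: "\<And>t. 0 < t \<Longrightarrow> real (card {i\<in>{1..m}. t \<le> \<bar>b i\<bar>}) * t \<le> 1"
    and U: "U \<subseteq> {1..m}"
    and lb: "\<And>i. i \<in> U \<Longrightarrow> 2 powr (- real (lev i)) \<le> \<bar>b i\<bar>"
    and l: "0 < l"
    and mX: "real m = 2 powr X"
    and \<alpha>: "0 \<le> \<alpha>"
    and win1: "\<And>j. j \<in> lev ` U \<Longrightarrow> real l / 2 \<le> X - real j"
    and win2: "\<And>j j'. j \<in> lev ` U \<Longrightarrow> j' \<in> lev ` U \<Longrightarrow>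
                  X - real j + log 2 (real l) \<le> (1 + \<alpha>) * (X - real j')"
    and mass: "(\<Sum>i\<in>U. 2 powr (- real (lev i))) > 2 + real (card (lev ` U)) / real l"
  shows "\<exists>I1 \<subseteq> {1..m}. \<forall>lam::nat \<Rightarrow> real. l1_norm lam I1 \<le> 1 \<longrightarrow>
        (\<exists>I2 \<subseteq> I1.
          2 powr (real l / 2) \<le> real m / real (card I1) \<and>
          real m / real (card I1) \<le> real m / real (card I2) \<and>
          real m / real (card I2) \<le> (real m / real (card I1)) powr (1 + \<alpha>) \<and>
          (\<forall>i\<in>I1. \<bar>b i\<bar> \<ge> 1 / (real l * real (card I1))) \<and>
          (\<forall>i\<in>I2. \<bar>b i\<bar> \<ge> 1 / (real l * real (card I2)) \<and> \<bar>b i\<bar> \<ge> 2 * \<bar>lam i\<bar>))"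
proof -
  define J where "J = lev ` U"
  have fU: "finite U" using U finite_subset by blast
  have fJ: "finite J" using fU by (simp add: J_def)
  define Lj where "Lj j = {i\<in>U. lev i = j}" for j
  define \<nu> where "\<nu> j = real (card (Lj j)) * 2 powr (- real j) - 1 / real l" for j
  define Cd where "Cd = {j\<in>J. \<nu> j > 0}"
  define I1 where "I1 = {i\<in>U. lev i \<in> Cd}"
  have fL: "finite (Lj j)" for j using fU by (simp add: Lj_def)
  have sumeq: "(\<Sum>j\<in>J. real (card (Lj j)) * 2 powr (- real j)) = (\<Sum>i\<in>U. 2 powr (- real (lev i)))"
  proof -
    have "(\<Sum>i\<in>U. 2 powr (- real (lev i))) = (\<Sum>j\<in>J. \<Sum>i\<in>{x\<in>U. lev x = j}. 2 powr (- real (lev i)))"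
      by (rule sum.group[symmetric]) (auto simp: J_def fU)
    also have "\<dots> = (\<Sum>j\<in>J. real (card (Lj j)) * 2 powr (- real j))"
    proof (rule sum.cong[OF refl])
      fix j
      have "(\<Sum>i\<in>{x\<in>U. lev x = j}. 2 powr (- real (lev i))) = (\<Sum>i\<in>Lj j. 2 powr (- real j))"
        by (rule sum.cong) (auto simp: Lj_def)
      thus "(\<Sum>i\<in>{x\<in>U. lev x = j}. 2 powr (- real (lev i))) = real (card (Lj j)) * 2 powr (- real j)"
        by simp
    qed
    finally show ?thesis by simp
  qed
  have sumJ: "(\<Sum>j\<in>J. \<nu> j) = (\<Sum>i\<in>U. 2 powr (- real (lev i))) - real (card J) / real l"
    by (simp add: \<nu>_def sum_subtractf sumeq)
  have CdJ: "Cd \<subseteq> J" by (auto simp: Cd_def)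
  have fCd: "finite Cd" using fJ CdJ finite_subset by blast
  have "(\<Sum>j\<in>J. \<nu> j) = (\<Sum>j\<in>J - Cd. \<nu> j) + (\<Sum>j\<in>Cd. \<nu> j)"
    by (rule sum.subset_diff[OF CdJ fJ])
  moreover have "(\<Sum>j\<in>J - Cd. \<nu> j) \<le> 0" by (rule sum_nonpos) (auto simp: Cd_def)
  ultimately have Cdsum: "(\<Sum>j\<in>Cd. \<nu> j) > 2" using sumJ mass by (simp add: J_def)
  hence Cdne: "Cd \<noteq> {}" by auto
  define jm where "jm = Max Cd"
  have jmCd: "jm \<in> Cd" using Max_in[OF fCd Cdne] by (simp add: jm_def)
  have jmax: "j \<le> jm" if "j \<in> Cd" for j using Max_ge[OF fCd that] by (simp add: jm_def)
  have jmJ: "jm \<in> J" using jmCd CdJ by auto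
  have fI1: "finite I1" using fU by (simp add: I1_def)
  have I1U: "I1 \<subseteq> U" by (auto simp: I1_def)
  have LjI1: "Lj j \<subseteq> I1" if "j \<in> Cd" for j using that by (auto simp: Lj_def I1_def)
  define n1 where "n1 = card I1"
  have t0: "0 < (2::real) powr (- real jm)" by simp
  have hn1a: "real n1 * 2 powr (- real jm) > 1 / real l"
  proof -
    have "1 / real l < real (card (Lj jm)) * 2 powr (- real jm)"
      using jmCd by (simp add: Cd_def \<nu>_def)
    also have "\<dots> \<le> real n1 * 2 powr (- real jm)"
      unfolding n1_def using card_mono[OF fI1 LjI1[OF jmCd]] t0
      by (intro mult_right_mono) auto
    finally show ?thesis .
  qed
  have blev: "2 powr (- real jm) \<le> \<bar>b i\<bar>" if "i \<in> I1" for i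
  proof -
    have "lev i \<le> jm" using that jmax by (auto simp: I1_def)
    hence "2 powr (- real jm) \<le> 2 powr (- real (lev i))" by simp
    also have "\<dots> \<le> \<bar>b i\<bar>" using that I1U lb by auto
    finally show ?thesis .
  qed
  have hn1b: "real n1 * 2 powr (- real jm) \<le> 1"
  proof -
    have "I1 \<subseteq> {i\<in>{1..m}. 2 powr (- real jm) \<le> \<bar>b i\<bar>}" using I1U U blev by auto
    hence "card I1 \<le> card {i\<in>{1..m}. 2 powr (- real jm) \<le> \<bar>b i\<bar>}" by (intro card_mono) auto
    hence "real n1 * 2 powr (- real jm) \<le> real (card {i\<in>{1..m}. 2 powr (- real jm) \<le> \<bar>b i\<bar>}) * 2 powr (- real jm)"
      unfolding n1_def using t0 by (intro mult_right_mono) auto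
    also have "\<dots> \<le> 1" by (rule F1[OF t0])
    finally show ?thesis .
  qed
  have n1pos: "0 < n1" using hn1a l by (cases n1) (auto simp: divide_simps)
  define P where "P = 2 powr (X - real jm)"
  have Pm: "P = real m * 2 powr (- real jm)" by (simp add: P_def mX powr_diff powr_minus divide_inverse)
  have hP: "P \<le> real m / real n1"
  proof -
    have "real m * (real n1 * 2 powr (- real jm)) \<le> real m * 1" using hn1b by (intro mult_left_mono) auto
    thus ?thesis using n1pos by (simp add: Pm field_simps)
  qed
  have P0: "0 \<le> P" by (simp add: P_def)
  have hP1: "2 powr (real l / 2) \<le> P" using win1 jmJ by (simp add: P_def J_def)
  have i1: "\<forall>i\<in>I1. \<bar>b i\<bar> \<ge> 1 / (real l * real (card I1))"
  proof
    fix i assume i: "i \<in> I1"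
    have "1 / (real l * real n1) \<le> 2 powr (- real jm)"
      using hn1a l n1pos by (simp add: field_simps)
    thus "\<bar>b i\<bar> \<ge> 1 / (real l * real (card I1))" using blev[OF i] by (simp add: n1_def)
  qed
  show ?thesis
  proof (rule exI[of _ I1], intro conjI allI impI)
    show "I1 \<subseteq> {1..m}" using I1U U by auto
    fix lam :: "nat \<Rightarrow> real"
    assume lam: "l1_norm lam I1 \<le> 1"
    define \<mu> where "\<mu> j = (\<Sum>i\<in>Lj j. \<bar>lam i\<bar>)" for j
    have musum: "(\<Sum>j\<in>Cd. \<mu> j) = (\<Sum>i\<in>I1. \<bar>lam i\<bar>)"
    proof -
      have "(\<Sum>i\<in>I1. \<bar>lam i\<bar>) = (\<Sum>j\<in>Cd. \<Sum>i\<in>{x\<in>I1. lev x = j}. \<bar>lam i\<bar>)"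
        by (rule sum.group[OF fI1 fCd, symmetric]) (auto simp: I1_def)
      also have "\<dots> = (\<Sum>j\<in>Cd. \<mu> j)"
        by (rule sum.cong[OF refl]) (auto simp: \<mu>_def Lj_def I1_def intro!: sum.cong)
      finally show ?thesis by simp
    qed
    obtain j where jCd: "j \<in> Cd" and jnu: "2 * \<mu> j \<le> \<nu> j"
    proof (rule ccontr)
      assume "\<not> thesis"
      with that have all: "\<forall>j\<in>Cd. \<nu> j < 2 * \<mu> j" by force
      have "(\<Sum>j\<in>Cd. \<nu> j) < (\<Sum>j\<in>Cd. 2 * \<mu> j)"
        by (rule sum_strict_mono[OF fCd Cdne]) (use all in auto)
      also have "\<dots> = 2 * (\<Sum>i\<in>I1. \<bar>lam i\<bar>)" by (simp only: sum_distrib_left[symmetric] musum)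
      also have "\<dots> \<le> 2" using lam by (simp add: l1_norm_def)
      finally show False using Cdsum by simp
    qed
    define G where "G = {i\<in>Lj j. 2 * \<bar>lam i\<bar> \<le> \<bar>b i\<bar>}"
    define B where "B = Lj j - G"
    have GL: "G \<subseteq> Lj j" by (auto simp: G_def)
    have GI1: "G \<subseteq> I1" using GL LjI1[OF jCd] by auto
    have fG: "finite G" using fL GL finite_subset by blast
    have tj: "0 < (2::real) powr (- real j)" by simp
    have hB: "real (card B) * 2 powr (- real j) \<le> 2 * \<mu> j"
    proof -
      have "real (card B) * 2 powr (- real j) = (\<Sum>i\<in>B. 2 powr (- real j))" by simp
      also have "\<dots> \<le> (\<Sum>i\<in>B. 2 * \<bar>lam i\<bar>)"
      proof (rule sum_mono)
        fix i assume i: "i \<in> B"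
        hence iU: "i \<in> U" and lv: "lev i = j" and nb: "\<not> 2 * \<bar>lam i\<bar> \<le> \<bar>b i\<bar>"
          by (auto simp: B_def G_def Lj_def)
        show "2 powr (- real j) \<le> 2 * \<bar>lam i\<bar>" using lb[OF iU] lv nb by simp
      qed
      also have "\<dots> \<le> (\<Sum>i\<in>Lj j. 2 * \<bar>lam i\<bar>)"
        by (rule sum_mono2[OF fL]) (auto simp: B_def)
      also have "\<dots> = 2 * \<mu> j" by (simp add: \<mu>_def sum_distrib_left)
      finally show ?thesis .
    qed
    have cG: "real (card G) = real (card (Lj j)) - real (card B)"
      unfolding B_def using card_Diff_subset[OF fG GL] card_mono[OF fL[of j] GL] by simp
    have hG: "real (card G) * 2 powr (- real j) \<ge> 1 / real l"
      using hB jnu cG by (simp add: \<nu>_def left_diff_distrib)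
    have n2pos: "0 < card G" using hG l by (cases "card G") (auto simp: divide_simps)
    have n2n1: "card G \<le> n1" unfolding n1_def by (rule card_mono[OF fI1 GI1])
    show "\<exists>I2\<subseteq>I1.
          2 powr (real l / 2) \<le> real m / real (card I1) \<and>
          real m / real (card I1) \<le> real m / real (card I2) \<and>
          real m / real (card I2) \<le> (real m / real (card I1)) powr (1 + \<alpha>) \<and>
          (\<forall>i\<in>I1. \<bar>b i\<bar> \<ge> 1 / (real l * real (card I1))) \<and>
          (\<forall>i\<in>I2. \<bar>b i\<bar> \<ge> 1 / (real l * real (card I2)) \<and> \<bar>b i\<bar> \<ge> 2 * \<bar>lam i\<bar>)"
    proof (intro exI[of _ G] conjI)
      show "G \<subseteq> I1" by (rule GI1)
      show "2 powr (real l / 2) \<le> real m / real (card I1)" using hP1 hP by (simp add: n1_def)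
      show "real m / real (card I1) \<le> real m / real (card G)"
        using n2pos n2n1 by (intro divide_left_mono) (auto simp: n1_def)
      have jJ: "j \<in> J" using jCd CdJ by auto
      have "real m / real (card G) \<le> real m * real l * 2 powr (- real j)"
      proof -
        have "real m * 1 \<le> real m * (real l * (real (card G) * 2 powr (- real j)))"
          using hG l by (intro mult_left_mono) (auto simp: field_simps)
        thus ?thesis using n2pos by (simp add: field_simps)
      qed
      also have "\<dots> = 2 powr (X - real j + log 2 (real l))"
        using l by (simp add: powr_add powr_diff mX powr_minus divide_inverse)
      also have "\<dots> \<le> 2 powr ((X - real jm) * (1 + \<alpha>))"
        using win2[of j jm] jJ jmJ by (simp add: J_def mult.commute)
      also have "\<dots> = P powr (1 + \<alpha>)" by (simp add: P_def powr_powr)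
      also have "\<dots> \<le> (real m / real (card I1)) powr (1 + \<alpha>)"
        using hP P0 \<alpha> by (intro powr_mono2) (auto simp: n1_def)
      finally show "real m / real (card G) \<le> (real m / real (card I1)) powr (1 + \<alpha>)" .
      show "\<forall>i\<in>I1. \<bar>b i\<bar> \<ge> 1 / (real l * real (card I1))" by (rule i1)
      show "\<forall>i\<in>G. \<bar>b i\<bar> \<ge> 1 / (real l * real (card G)) \<and> \<bar>b i\<bar> \<ge> 2 * \<bar>lam i\<bar>"
      proof
        fix i assume i: "i \<in> G"
        hence iU: "i \<in> U" and lv: "lev i = j" and g: "2 * \<bar>lam i\<bar> \<le> \<bar>b i\<bar>"
          by (auto simp: G_def Lj_def)
        have "1 / (real l * real (card G)) \<le> 2 powr (- real j)"
          using hG l n2pos by (simp add: field_simps)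
        also have "\<dots> \<le> \<bar>b i\<bar>" using lb[OF iU] lv by simp
        finally show "\<bar>b i\<bar> \<ge> 1 / (real l * real (card G)) \<and> \<bar>b i\<bar> \<ge> 2 * \<bar>lam i\<bar>" using g by simp
      qed
    qed
  qed
qed



lemma card_nat_interval:
  fixes J :: "nat set" and r s :: real
  assumes fJ: "finite J" and rs: "r \<le> s" and b: "\<And>j. j \<in> J \<Longrightarrow> r < real j \<and> real j \<le> s"
  shows "real (card J) \<le> s - r + 1"
proof (cases "J = {}")
  case True
  thus ?thesis using rs by simp
next
  case False
  have sub: "J \<subseteq> {Min J..Max J}" using fJ by auto
  have "card J \<le> card {Min J..Max J}" by (rule card_mono[OF _ sub]) simp
  also have "\<dots> = Max J + 1 - Min J" by simp
  finally have c: "real (card J) \<le> real (Max J) + 1 - real (Min J)"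
    using Min_le[OF fJ, of "Max J"] Max_in[OF fJ False] by linarith
  have "real (Max J) \<le> s" using b Max_in[OF fJ False] by blast
  moreover have "r < real (Min J)" using b Min_in[OF fJ False] by blast
  ultimately show ?thesis using c by linarith
qed

lemma ln2_ge_half: "1/2 \<le> ln (2::real)"
proof -
  have "ln (1/2::real) \<le> 1/2 - 1" by (rule ln_le_minus_one) simp
  thus ?thesis by (simp add: ln_div)
qed

lemma log2_le_lin:
  fixes a \<alpha> :: real
  assumes \<alpha>: "0 < \<alpha>" and a: "64 / \<alpha>^2 \<le> a"
  shows "log 2 a \<le> \<alpha> / 2 * a"
proof -
  have a0: "0 < a" using a \<alpha> by (smt (verit) divide_pos_pos zero_less_power)
  have sa: "0 < sqrt a" using a0 by simp
  have "ln (sqrt a) \<le> sqrt a - 1" by (rule ln_le_minus_one[OF sa])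
  hence lna: "ln a \<le> 2 * sqrt a" using a0 by (simp add: ln_sqrt)
  have l4: "log 2 a \<le> 4 * sqrt a"
  proof (cases "ln a \<ge> 0")
    case True
    have "log 2 a = ln a / ln 2" by (simp add: log_def)
    also have "\<dots> \<le> ln a / (1/2)" using ln2_ge_half True by (intro divide_left_mono) auto
    also have "\<dots> \<le> 4 * sqrt a" using lna by simp
    finally show ?thesis .
  next
    case False
    have "ln a / ln 2 \<le> 0" by (rule divide_nonpos_pos) (use False ln2_ge_half in auto)
    hence "log 2 a \<le> 0" by (simp add: log_def)
    thus ?thesis using sa by linarith
  qed
  have "log 2 a \<le> 4 * sqrt a" by (rule l4)
  also have "\<dots> \<le> \<alpha> / 2 * a"
  proof -
    have "8 / \<alpha> \<le> sqrt a"
    proof -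
      have "sqrt (64 / \<alpha>^2) \<le> sqrt a" using a by simp
      moreover have "sqrt (64 / \<alpha>^2) = 8 / \<alpha>" using \<alpha>
        by (simp add: real_sqrt_divide real_sqrt_abs2)
      ultimately show ?thesis by simp
    qed
    hence "8 \<le> \<alpha> * sqrt a" using \<alpha> by (simp add: field_simps)
    hence "8 * sqrt a \<le> \<alpha> * sqrt a * sqrt a" using sa by (intro mult_right_mono) auto
    also have "\<dots> = \<alpha> * a" using a0 by (simp add: mult.assoc)
    finally show ?thesis by simp
  qed
  finally show ?thesis .
qed



theorem proposition3p1:
  fixes \<alpha> A :: real
  assumes "0 < \<alpha>" and "\<alpha> < 1" and "0 < A"
  shows "\<exists>C::real. \<forall>(m::nat) (b::nat \<Rightarrow> real).
    m \<ge> 4 \<and> weak_l1_norm b m \<le> 1 \<and> l1_norm b {1..m} \<ge> C * (log 2 (log 2 (real m)))^2 \<longrightarrow>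
    (\<exists>l::nat. 0 < l \<and> A * log 2 (log 2 (real m)) \<le> real l \<and> real l \<le> log 2 (real m) \<and>
      (\<exists>I1 \<subseteq> {1..m}. \<forall>lam::nat \<Rightarrow> real. l1_norm lam I1 \<le> 1 \<longrightarrow>
        (\<exists>I2 \<subseteq> I1.
          2 powr (real l / 2) \<le> real m / real (card I1) \<and>
          real m / real (card I1) \<le> real m / real (card I2) \<and>
          real m / real (card I2) \<le> (real m / real (card I1)) powr (1 + \<alpha>) \<and>
          (\<forall>i\<in>I1. \<bar>b i\<bar> \<ge> 1 / (real l * real (card I1))) \<and>
          (\<forall>i\<in>I2. \<bar>b i\<bar> \<ge> 1 / (real l * real (card I2)) \<and> \<bar>b i\<bar> \<ge> 2 * \<bar>lam i\<bar>))))"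
proof -
  note \<alpha>0 = assms(1) and \<alpha>1 = assms(2) and A0 = assms(3)
  define \<beta> where "\<beta> = 1 + \<alpha> / 2"
  define c1 where "c1 = 64 / \<alpha>^2 + 16 / \<alpha> + 2"
  define q where "q = ln 2 / ln \<beta>"
  define D where "D = 2 * \<beta> * (A + 1 + c1) + 4 + 14 * (q + 1) + 1"
  have \<beta>1: "1 < \<beta>" using \<alpha>0 by (simp add: \<beta>_def)
  have c1pos: "0 < c1" using \<alpha>0 unfolding c1_def by (intro add_pos_pos) auto
  have q0: "0 \<le> q" using \<beta>1 by (simp add: q_def)
  have D0: "0 \<le> D" using \<beta>1 c1pos A0 q0 unfolding D_def by simp
  show ?thesis
  proof (rule exI[of _ D], intro allI impI, elim conjE)
    fix m :: nat and b :: "nat \<Rightarrow> real"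
    assume m4: "4 \<le> m" and w: "weak_l1_norm b m \<le> 1"
      and Mb: "D * (log 2 (log 2 (real m)))^2 \<le> l1_norm b {1..m}"
    define X where "X = log 2 (real m)"
    define LX where "LX = log 2 X"
    have m0: "0 < real m" using m4 by simp
    have X2: "2 \<le> X" unfolding X_def using m4 by (subst le_log_iff) auto
    have LX1: "1 \<le> LX" unfolding LX_def using X2 by (subst le_log_iff) auto
    have mX: "real m = 2 powr X" using m0 by (simp add: X_def)
    have F1: "\<And>t. 0 < t \<Longrightarrow> real (card {i\<in>{1..m}. t \<le> \<bar>b i\<bar>}) * t \<le> 1"
      using weak_F1[OF w] by blast
    have b1: "\<bar>b i\<bar> \<le> 1" if i: "i \<in> {1..m}" for i
    proof (rule ccontr)
      assume "\<not> \<bar>b i\<bar> \<le> 1"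
      hence t: "1 < \<bar>b i\<bar>" by simp
      have "{i} \<subseteq> {j\<in>{1..m}. \<bar>b i\<bar> \<le> \<bar>b j\<bar>}" using i by simp
      hence "card {i} \<le> card {j\<in>{1..m}. \<bar>b i\<bar> \<le> \<bar>b j\<bar>}" by (intro card_mono) auto
      hence "1 \<le> card {j\<in>{1..m}. \<bar>b i\<bar> \<le> \<bar>b j\<bar>}" by simp
      hence "1 * \<bar>b i\<bar> \<le> real (card {j\<in>{1..m}. \<bar>b i\<bar> \<le> \<bar>b j\<bar>}) * \<bar>b i\<bar>"
        by (intro mult_right_mono) auto
      also have "\<dots> \<le> 1" using F1 t by simp
      finally show False using t by simp
    qed
    define lev where "lev i = nat \<lceil>- log 2 \<bar>b i\<bar>\<rceil>" for i
    define E where "E = {i\<in>{1..m}. b i \<noteq> 0}"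
    have levb: "2 powr (- real (lev i)) \<le> \<bar>b i\<bar> \<and> \<bar>b i\<bar> < 2 * 2 powr (- real (lev i))"
      if i: "i \<in> E" for i
    proof -
      have bp: "0 < \<bar>b i\<bar>" using i by (simp add: E_def)
      have bl: "\<bar>b i\<bar> \<le> 1" using i b1 by (simp add: E_def)
      define c where "c = - log 2 \<bar>b i\<bar>"
      have c0: "0 \<le> c" using bp bl by (simp add: c_def)
      have lc: "real (lev i) = of_int \<lceil>c\<rceil>" using c0 by (simp add: lev_def c_def)
      have l1: "c \<le> real (lev i)" using lc by simp
      have l2: "real (lev i) < c + 1" using lc by linarith
      have bc: "\<bar>b i\<bar> = 2 powr (- c)" using bp by (simp add: c_def)
      have "2 powr (- real (lev i)) \<le> 2 powr (- c)" using l1 by simp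
      moreover have "2 powr (- c) < 2 powr (1 - real (lev i))" using l2 by simp
      moreover have "2 powr (1 - real (lev i)) = 2 * 2 powr (- real (lev i))"
        by (simp add: powr_diff powr_minus divide_inverse)
      ultimately show ?thesis using bc by simp
    qed
    define y where "y i = X - real (lev i)" for i
    have yX: "y i \<le> X" for i by (simp add: y_def)
    define amin where "amin = A * LX + 1 + c1"
    have am1: "A * LX + 1 \<le> amin" using c1pos by (simp add: amin_def)
    have am2: "64 / \<alpha>^2 \<le> amin" "16 / \<alpha> \<le> amin" "2 \<le> amin"
      using A0 LX1 \<alpha>0 unfolding amin_def c1_def by (simp_all add: add_nonneg_pos)
    have am3: "amin \<le> (A + 1 + c1) * LX"
    proof -
      have cc: "c1 * 1 \<le> c1 * LX" by (rule mult_left_mono[OF LX1]) (use c1pos in simp)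
      have "(A + 1 + c1) * LX = A * LX + LX + c1 * LX" by (simp add: algebra_simps)
      thus ?thesis using cc LX1 unfolding amin_def by linarith
    qed
    define T where "T = {i\<in>E. y i < \<beta> * amin}"
    define R where "R = E - T"
    define key where "key i = nat \<lfloor>log \<beta> (y i)\<rfloor>" for i
    have keyR: "\<beta> powr real (key i) \<le> y i \<and> y i < \<beta> * \<beta> powr real (key i) \<and>
        amin < \<beta> powr real (key i) \<and> real (key i) \<le> log \<beta> X" if i: "i \<in> R" for i
    proof -
      have yb: "\<beta> * amin \<le> y i" using i by (auto simp: R_def T_def not_less)
      have ab: "amin \<le> \<beta> * amin" using \<beta>1 am2 by simp
      have y1: "1 \<le> y i" using yb ab am2(3) by linarith
      define v where "v = log \<beta> (y i)"
      have v0: "0 \<le> v" using y1 \<beta>1 by (simp add: v_def)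
      have kv: "real (key i) = of_int \<lfloor>v\<rfloor>" using v0 by (simp add: key_def v_def)
      have k1: "real (key i) \<le> v" using kv by simp
      have k2: "v < real (key i) + 1" using kv by linarith
      have yv: "y i = \<beta> powr v" using y1 \<beta>1 by (simp add: v_def)
      have p1: "\<beta> powr real (key i) \<le> y i" using k1 yv \<beta>1 by simp
      have p2: "y i < \<beta> * \<beta> powr real (key i)"
      proof -
        have "\<beta> powr v < \<beta> powr (real (key i) + 1)" using k2 \<beta>1 by simp
        thus ?thesis using yv \<beta>1 by (simp add: powr_add mult.commute)
      qed
      have "\<beta> * amin < \<beta> * \<beta> powr real (key i)" using yb p2 by linarith
      hence p3: "amin < \<beta> powr real (key i)" using \<beta>1 by simp
      have p4: "real (key i) \<le> log \<beta> X"
      proof -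
        have "v \<le> log \<beta> X" unfolding v_def using \<beta>1 y1 yX by (intro log_mono) auto
        thus ?thesis using k1 by simp
      qed
      show ?thesis using p1 p2 p3 p4 by blast
    qed
    have fE: "finite E" by (simp add: E_def)
    have TE: "T \<subseteq> E" by (auto simp: T_def)
    have fT: "finite T" using fE TE finite_subset by blast
    have fR: "finite R" using fE by (simp add: R_def)
    have ES: "E \<subseteq> {1..m}" by (auto simp: E_def)
    have l1E: "l1_norm b {1..m} = (\<Sum>i\<in>E. \<bar>b i\<bar>)"
      unfolding l1_norm_def by (rule sum.mono_neutral_right) (auto simp: E_def)
    have ETR: "(\<Sum>i\<in>E. \<bar>b i\<bar>) = (\<Sum>i\<in>T. \<bar>b i\<bar>) + (\<Sum>i\<in>R. \<bar>b i\<bar>)"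
      unfolding R_def using sum.subset_diff[OF TE fE, of "\<lambda>i. \<bar>b i\<bar>"] by simp
    have perlev: "(\<Sum>i\<in>Q. \<bar>b i\<bar>) \<le> 2" if QE: "Q \<subseteq> E" and Ql: "\<forall>i\<in>Q. lev i = j" for Q j
    proof -
      have t0: "0 < (2::real) powr (- real j)" by simp
      have "(\<Sum>i\<in>Q. \<bar>b i\<bar>) \<le> real (card Q) * (2 * 2 powr (- real j))"
        by (rule sum_bounded_above) (use levb QE Ql in force)
      also have "\<dots> = 2 * (real (card Q) * 2 powr (- real j))" by simp
      also have "real (card Q) * 2 powr (- real j) \<le> 1"
      proof -
        have "Q \<subseteq> {i\<in>{1..m}. 2 powr (- real j) \<le> \<bar>b i\<bar>}" using QE Ql levb ES by force
        hence "card Q \<le> card {i\<in>{1..m}. 2 powr (- real j) \<le> \<bar>b i\<bar>}" by (intro card_mono) auto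
        hence "real (card Q) * 2 powr (- real j) \<le> real (card {i\<in>{1..m}. 2 powr (- real j) \<le> \<bar>b i\<bar>}) * 2 powr (- real j)"
          using t0 by (intro mult_right_mono) auto
        also have "\<dots> \<le> 1" by (rule F1[OF t0])
        finally show ?thesis .
      qed
      finally show ?thesis by simp
    qed
    have tail: "(\<Sum>i\<in>T. \<bar>b i\<bar>) \<le> 2 * \<beta> * amin + 4"
    proof -
      define T1 where "T1 = {i\<in>T. X \<le> real (lev i)}"
      define T2 where "T2 = T - T1"
      have T1T: "T1 \<subseteq> T" by (auto simp: T1_def)
      have fT2: "finite T2" using fT by (simp add: T2_def)
      have split: "(\<Sum>i\<in>T. \<bar>b i\<bar>) = (\<Sum>i\<in>T2. \<bar>b i\<bar>) + (\<Sum>i\<in>T1. \<bar>b i\<bar>)"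
        unfolding T2_def by (rule sum.subset_diff[OF T1T fT])
      have s1: "(\<Sum>i\<in>T1. \<bar>b i\<bar>) \<le> 2"
      proof -
        have "(\<Sum>i\<in>T1. \<bar>b i\<bar>) \<le> real (card T1) * (2 / real m)"
        proof (rule sum_bounded_above)
          fix i assume i: "i \<in> T1"
          hence iE: "i \<in> E" and lx: "X \<le> real (lev i)" using TE by (auto simp: T1_def)
          have "\<bar>b i\<bar> < 2 * 2 powr (- real (lev i))" using levb[OF iE] by simp
          also have "\<dots> \<le> 2 * 2 powr (- X)" using lx by simp
          also have "\<dots> = 2 / real m" using mX by (simp add: powr_minus divide_inverse)
          finally show "\<bar>b i\<bar> \<le> 2 / real m" by simp
        qed
        also have "\<dots> \<le> real m * (2 / real m)"
        proof -
          have "T1 \<subseteq> {1..m}" using T1T TE ES by auto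
          hence "card T1 \<le> m" using card_mono[of "{1..m}" T1] by simp
          thus ?thesis using m0 by (intro mult_right_mono) auto
        qed
        also have "\<dots> = 2" using m0 by simp
        finally show ?thesis .
      qed
      have s2: "(\<Sum>i\<in>T2. \<bar>b i\<bar>) \<le> 2 * (\<beta> * amin + 1)"
      proof -
        have fL: "finite (lev ` T2)" using fT2 by simp
        have "(\<Sum>i\<in>T2. \<bar>b i\<bar>) = (\<Sum>j\<in>lev ` T2. \<Sum>i\<in>{x\<in>T2. lev x = j}. \<bar>b i\<bar>)"
          by (rule sum.group[OF fT2 fL, symmetric]) auto
        also have "\<dots> \<le> (\<Sum>j\<in>lev ` T2. 2)"
          by (rule sum_mono, rule perlev) (use TE in \<open>auto simp: T2_def\<close>)
        also have "\<dots> = 2 * real (card (lev ` T2))" by simp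
        also have "real (card (lev ` T2)) \<le> X - (X - \<beta> * amin) + 1"
        proof (rule card_nat_interval[OF fL])
          show "X - \<beta> * amin \<le> X" using \<beta>1 am2 by simp
          fix j assume "j \<in> lev ` T2"
          then obtain i where i: "i \<in> T2" "j = lev i" by auto
          have "y i < \<beta> * amin" "\<not> X \<le> real (lev i)" using i by (auto simp: T2_def T1_def T_def)
          thus "X - \<beta> * amin < real j \<and> real j \<le> X" using i by (simp add: y_def)
        qed
        finally show ?thesis by simp
      qed
      show ?thesis using split s1 s2 by simp
    qed
    define K where "K = key ` R"
    have fK: "finite K" using fR by (simp add: K_def)
    have cardK: "real (card K) \<le> LX * q + 1"
    proof -
      have lbX: "log \<beta> X = LX * q" using \<beta>1 X2 by (simp add: LX_def q_def log_def)
      have lb0: "0 \<le> log \<beta> X" using \<beta>1 X2 by simp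
      have "K \<subseteq> {..nat \<lfloor>log \<beta> X\<rfloor>}"
      proof
        fix k assume "k \<in> K"
        then obtain i where i: "i \<in> R" "k = key i" by (auto simp: K_def)
        have "real k \<le> log \<beta> X" using keyR[OF i(1)] i(2) by simp
        hence "k \<le> nat \<lfloor>log \<beta> X\<rfloor>" by linarith
        thus "k \<in> {..nat \<lfloor>log \<beta> X\<rfloor>}" by simp
      qed
      hence "card K \<le> nat \<lfloor>log \<beta> X\<rfloor> + 1" using card_mono[of "{..nat \<lfloor>log \<beta> X\<rfloor>}" K] by simp
      hence "real (card K) \<le> real (nat \<lfloor>log \<beta> X\<rfloor>) + 1" by linarith
      also have "real (nat \<lfloor>log \<beta> X\<rfloor>) \<le> log \<beta> X" using lb0 by linarith
      finally show ?thesis using lbX by simp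
    qed
    have sumR: "(\<Sum>i\<in>R. \<bar>b i\<bar>) = (\<Sum>k\<in>K. \<Sum>i\<in>{x\<in>R. key x = k}. \<bar>b i\<bar>)"
      by (rule sum.group[OF fR fK, symmetric]) (auto simp: K_def)
    obtain k where kK: "k \<in> K" and big: "14 \<le> (\<Sum>i\<in>{x\<in>R. key x = k}. \<bar>b i\<bar>)"
    proof (rule ccontr)
      assume "\<not> thesis"
      with that have all: "\<forall>k\<in>K. (\<Sum>i\<in>{x\<in>R. key x = k}. \<bar>b i\<bar>) \<le> 14" by force
      have "(\<Sum>i\<in>R. \<bar>b i\<bar>) \<le> real (card K) * 14"
        unfolding sumR by (rule sum_bounded_above) (use all in auto)
      also have "\<dots> \<le> (LX * q + 1) * 14" using cardK by simp
      finally have sR: "(\<Sum>i\<in>R. \<bar>b i\<bar>) \<le> 14 * (LX * q) + 14" by simp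
      have e1: "2 * \<beta> * amin \<le> 2 * \<beta> * ((A + 1 + c1) * LX)" using am3 \<beta>1 by simp
      have "l1_norm b {1..m} \<le> 2 * \<beta> * amin + 4 + 14 * (LX * q) + 14"
        using l1E ETR tail sR by simp
      also have "\<dots> < D * LX"
        using e1 LX1 unfolding D_def by (simp add: algebra_simps)
      also have "\<dots> \<le> D * LX^2"
        using D0 LX1 by (intro mult_left_mono) (auto simp: power2_eq_square)
      finally show False using Mb by (simp add: LX_def X_def)
    qed
    define U where "U = {x\<in>R. key x = k}"
    define a where "a = \<beta> powr real k"
    have Ufacts: "a \<le> y i \<and> y i < \<beta> * a \<and> amin < a" if "i \<in> U" for i
      using keyR[of i] that by (auto simp: U_def a_def)
    have UR: "U \<subseteq> R" by (auto simp: U_def)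
    have US: "U \<subseteq> {1..m}" using UR ES by (auto simp: R_def)
    have UE: "U \<subseteq> E" using UR by (auto simp: R_def)
    have fU: "finite U" using fR UR finite_subset by blast
    have Une: "U \<noteq> {}"
    proof
      assume "U = {}"
      hence "{x\<in>R. key x = k} = {}" by (simp add: U_def)
      hence "(\<Sum>i\<in>{x\<in>R. key x = k}. \<bar>b i\<bar>) = 0" by (simp only: sum.empty)
      with big show False by simp
    qed
    then obtain i0 where i0: "i0 \<in> U" by blast
    have aX: "a \<le> X" using Ufacts[OF i0] yX[of i0] by simp
    have ama: "amin < a" using Ufacts[OF i0] by simp
    have a0: "0 < a" using ama am2 by simp
    define l where "l = nat \<lceil>max (A * LX) (\<alpha> * a / 8)\<rceil>"
    have "0 < \<alpha> * a / 8" using \<alpha>0 a0 by simp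
    hence mxpos: "0 < max (A * LX) (\<alpha> * a / 8)" by linarith
    have lr: "real l = of_int \<lceil>max (A * LX) (\<alpha> * a / 8)\<rceil>" using mxpos by (simp add: l_def)
    have hl1: "\<alpha> * a / 8 \<le> real l" and hl2: "A * LX \<le> real l" using lr by linarith+
    have hl3: "real l \<le> a"
    proof -
      have "real l < max (A * LX) (\<alpha> * a / 8) + 1" using lr by linarith
      moreover have "A * LX + 1 \<le> a" using am1 ama by simp
      moreover have "\<alpha> * a / 8 + 1 \<le> a"
      proof -
        have h: "\<alpha> * a \<le> 1 * a" using \<alpha>1 a0 by (intro mult_right_mono) auto
        show ?thesis using h ama am2(3) by linarith
      qed
      ultimately show ?thesis by simp
    qed
    have lpos: "0 < l" using hl1 \<alpha>0 a0
      by (metis divide_pos_pos mult_pos_pos of_nat_0_less_iff order_less_le_trans zero_less_numeral)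
    have loglin: "log 2 (real l) \<le> \<alpha> / 2 * a"
    proof -
      have "log 2 (real l) \<le> log 2 a" using lpos hl3 by (intro log_mono) auto
      also have "\<dots> \<le> \<alpha> / 2 * a" by (rule log2_le_lin[OF \<alpha>0]) (use am2 ama in simp)
      finally show ?thesis .
    qed
    have \<alpha>a: "16 \<le> \<alpha> * a"
    proof -
      have "16 / \<alpha> \<le> a" using am2 ama by simp
      thus ?thesis using \<alpha>0 by (simp add: field_simps)
    qed
    define J where "J = lev ` U"
    have Jb: "X - \<beta> * a < real j \<and> real j \<le> X - a" if "j \<in> J" for j
    proof -
      obtain i where i: "i \<in> U" "j = lev i" using \<open>j \<in> J\<close> by (auto simp: J_def)
      thus ?thesis using Ufacts[OF i(1)] by (simp add: y_def)
    qed
    have cardJ: "real (card J) \<le> \<alpha> * a / 2 + 1"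
    proof -
      have "real (card J) \<le> (X - a) - (X - \<beta> * a) + 1"
        by (rule card_nat_interval) (use fU Jb \<beta>1 a0 in \<open>auto simp: J_def\<close>)
      thus ?thesis by (simp add: \<beta>_def algebra_simps)
    qed
    have massU: "(\<Sum>i\<in>U. 2 powr (- real (lev i))) > 2 + real (card (lev ` U)) / real l"
    proof -
      have "(\<Sum>i\<in>U. \<bar>b i\<bar>) / 2 = (\<Sum>i\<in>U. \<bar>b i\<bar> / 2)" by (simp add: sum_divide_distrib)
      also have "\<dots> \<le> (\<Sum>i\<in>U. 2 powr (- real (lev i)))"
        by (rule sum_mono) (use levb UE in force)
      finally have s7: "7 \<le> (\<Sum>i\<in>U. 2 powr (- real (lev i)))" using big by (simp add: U_def)
      have "real (card J) \<le> 9/2 * (\<alpha> * a / 8)" using cardJ \<alpha>a by simp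
      also have "\<dots> \<le> 9/2 * real l" using hl1 by simp
      finally have h: "real (card J) / real l \<le> 9/2" using lpos by (simp add: field_simps)
      show ?thesis using s7 h unfolding J_def by linarith
    qed
    have win1: "real l / 2 \<le> X - real j" if "j \<in> lev ` U" for j
      using Jb[of j] that hl3 \<beta>1 by (simp add: J_def)
    have win2: "X - real j + log 2 (real l) \<le> (1 + \<alpha>) * (X - real j')"
      if "j \<in> lev ` U" "j' \<in> lev ` U" for j j'
    proof -
      have "X - real j < \<beta> * a" using Jb[of j] that by (simp add: J_def)
      moreover have "a \<le> X - real j'" using Jb[of j'] that by (simp add: J_def)
      hence "(1 + \<alpha>) * a \<le> (1 + \<alpha>) * (X - real j')" using \<alpha>0 by (intro mult_left_mono) auto
      ultimately show ?thesis using loglin by (simp add: \<beta>_def algebra_simps)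
    qed
    have W: "\<exists>I1 \<subseteq> {1..m}. \<forall>lam::nat \<Rightarrow> real. l1_norm lam I1 \<le> 1 \<longrightarrow>
        (\<exists>I2 \<subseteq> I1.
          2 powr (real l / 2) \<le> real m / real (card I1) \<and>
          real m / real (card I1) \<le> real m / real (card I2) \<and>
          real m / real (card I2) \<le> (real m / real (card I1)) powr (1 + \<alpha>) \<and>
          (\<forall>i\<in>I1. \<bar>b i\<bar> \<ge> 1 / (real l * real (card I1))) \<and>
          (\<forall>i\<in>I2. \<bar>b i\<bar> \<ge> 1 / (real l * real (card I2)) \<and> \<bar>b i\<bar> \<ge> 2 * \<bar>lam i\<bar>))"
      by (rule window_lemma[OF F1 US _ lpos mX _ win1 win2 massU])
         (use levb UE \<alpha>0 in auto)
    show "\<exists>l::nat. 0 < l \<and> A * log 2 (log 2 (real m)) \<le> real l \<and> real l \<le> log 2 (real m) \<and>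
      (\<exists>I1 \<subseteq> {1..m}. \<forall>lam::nat \<Rightarrow> real. l1_norm lam I1 \<le> 1 \<longrightarrow>
        (\<exists>I2 \<subseteq> I1.
          2 powr (real l / 2) \<le> real m / real (card I1) \<and>
          real m / real (card I1) \<le> real m / real (card I2) \<and>
          real m / real (card I2) \<le> (real m / real (card I1)) powr (1 + \<alpha>) \<and>
          (\<forall>i\<in>I1. \<bar>b i\<bar> \<ge> 1 / (real l * real (card I1))) \<and>
          (\<forall>i\<in>I2. \<bar>b i\<bar> \<ge> 1 / (real l * real (card I2)) \<and> \<bar>b i\<bar> \<ge> 2 * \<bar>lam i\<bar>)))"
    proof (rule exI[of _ l], intro conjI)
      show "0 < l" by (rule lpos)
      show "A * log 2 (log 2 (real m)) \<le> real l" using hl2 by (simp add: LX_def X_def)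
      show "real l \<le> log 2 (real m)" using hl3 aX by (simp add: X_def)
    qed (rule W)
  qed
qed

end
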